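(* Let $d,a,b$ be positive integers, $r=(d+2b)/d$, $R=(a+d)/d$, and assume $r\ge2$ and $R\ge3r$. Let $\rho=x_1-r$ with $x_1$ as in the context. Then \[ \rho<\frac{5r}{2e^{R/r}}. \]
   Context: For $t\in\mathbb C\setminus\{\pm1,\pm r\}$ let $\Phi(t)=d\log|t+r|-d\log|t-r|+(a+d)(\log|t-1|-\log|t+1|)$. Under $R\ge3r$ there is a unique $x_1\in(r,\infty)$ with $\Phi(x_1)=0$. *)

theory Defs
  imports Complex_Main
begin

text \<open>Phi restricted to real arguments t (x_1 lies on the real axis); |.| is the absolute value.\<close>
definition Phi :: "real \<Rightarrow> real \<Rightarrow> real \<Rightarrow> real \<Rightarrow> real" where
  "Phi d a r t = d * ln (abs (t + r)) - d * ln (abs (t - r)) + (a + d) * (ln (abs (t - 1)) - ln (abs (t + 1)))"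

end

theory Submission imports Defs begin
lemma ln_lb:
  fixes u :: real assumes "u \<ge> 0" shows "2*u/(2+u) \<le> ln (1+u)"
proof -
  let ?h = "\<lambda>v::real. ln (1+v) - 2*v/(2+v)"
  have "?h 0 \<le> ?h u"
  proof (rule DERIV_nonneg_imp_nondecreasing[OF assms])
    fix v :: real assume v: "0 \<le> v" "v \<le> u"
    have d: "DERIV ?h v :> (1/(1+v) - (2*(2+v) - 2*v)/(2+v)^2)"
      using v by (auto intro!: derivative_eq_intros simp: power2_eq_square)
    have "1/(1+v) - (2*(2+v) - 2*v)/(2+v)^2 = v^2/((1+v)*(2+v)^2)"
      proof -
      have p: "1+v > 0" "2+v > 0" using v by auto
      show ?thesis using p by (simp add: divide_simps power2_eq_square) (simp add: algebra_simps)
    qed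
    moreover have "v^2/((1+v)*(2+v)^2) \<ge> 0" using v by simp
    ultimately show "\<exists>y. DERIV ?h v :> y \<and> y \<ge> 0" using d by metis
  qed
  then show ?thesis by simp
qed

lemma ln_ratio_lb:
  fixes x :: real assumes "x > 1" shows "2/x \<le> ln (x+1) - ln (x-1)"
proof -
  have u: "2/(x-1) \<ge> 0" using assms by simp
  have "ln (x+1) - ln (x-1) = ln ((x+1)/(x-1))" using assms by (simp add: ln_div)
  also have "(x+1)/(x-1) = 1 + 2/(x-1)" using assms by (simp add: field_simps)
  finally have e: "ln (x+1) - ln (x-1) = ln (1 + 2/(x-1))" .
  have "2*(2/(x-1))/(2+2/(x-1)) = 2/x" using assms by (simp add: field_simps)
  with ln_lb[OF u] e show ?thesis by simp
qed
theorem lemma4p14: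
  fixes d a b :: nat and r R x1 :: real
  assumes "d > 0" "a > 0" "b > 0"
    and "r = (real d + 2 * real b) / real d"
    and "R = (real a + real d) / real d"
    and "r \<ge> 2" and "R \<ge> 3 * r"
    and "x1 > r" and "Phi (real d) (real a) r x1 = 0"
  shows "x1 - r < 5 * r / (2 * exp (R / r))"
proof (rule ccontr)
  assume H: "\<not> ?thesis"
  define \<rho> where "\<rho> = x1 - r"
  define s where "s = R / r"
  have r2: "r \<ge> 2" and Rr: "R \<ge> 3*r" and xr: "x1 > r" using assms by auto
  have rpos: "r > 0" using r2 by simp
  have rho: "\<rho> > 0" using xr \<rho>_def by simp
  have s3: "s \<ge> 3" using Rr rpos s_def by (simp add: le_divide_eq)
  have Rs: "R = s * r" using rpos s_def by simp
  have dpos: "real d > 0" using assms by simp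
  have Rd: "real a + real d = R * real d" using assms(5) dpos by simp
  have "real d * ln (x1 + r) - real d * ln (x1 - r) + (real a + real d) * (ln (x1 - 1) - ln (x1 + 1)) = 0"
    using assms(9) xr r2 by (simp add: Phi_def)
  hence "real d * (ln (x1 + r) - ln (x1 - r) - R * (ln (x1 + 1) - ln (x1 - 1))) = 0"
    unfolding Rd by (simp add: algebra_simps)
  hence eq: "ln (x1 + r) - ln (x1 - r) = R * (ln (x1 + 1) - ln (x1 - 1))" using dpos by simp
  have "R * (2/x1) \<le> R * (ln (x1 + 1) - ln (x1 - 1))"
    using ln_ratio_lb[of x1] xr r2 Rr rpos by (intro mult_left_mono) auto
  hence L: "2*R/(r+\<rho>) \<le> ln (1 + 2*r/\<rho>)"
  proof -
    have e1: "ln (x1 + r) - ln (x1 - r) = ln ((x1+r)/(x1-r))" using xr rpos by (simp add: ln_div)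
    have e2: "(x1+r)/(x1-r) = 1 + 2*r/\<rho>" proof -
      have "x1 = r + \<rho>" using \<rho>_def by simp
      thus ?thesis using rho by (simp add: field_simps)
    qed
    moreover have "R*(2/x1) = 2*R/(r+\<rho>)" using \<rho>_def by simp
    ultimately show ?thesis using eq \<open>R * (2/x1) \<le> _\<close> e1 e2 by simp
  qed
  have H2: "\<rho> \<ge> 5 * r / (2 * exp s)" using H \<rho>_def s_def by simp
  show False
  proof (cases "\<rho> * (R - r) \<ge> r^2")
    case True
    have "ln (1 + 2*r/\<rho>) < 2*r/\<rho>" using rho rpos
      by (intro ln_add_one_self_less_self) simp
    moreover have "2*r/\<rho> \<le> 2*R/(r+\<rho>)"
      using True rho rpos by (simp add: divide_simps power2_eq_square) (simp add: algebra_simps)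
    ultimately show False using L by simp
  next
    case False
    have t0: "2*r/\<rho> \<le> 4/5 * exp s"
      using H2 rho rpos by (simp add: divide_simps)
    have c1: "ln (1 + 2*r/\<rho>) \<le> ln (1 + 4/5 * exp s)"
    proof -
      have "0 < 2*r/\<rho>" using rho rpos by simp
      moreover have "0 < exp s" by simp
      ultimately show ?thesis using t0 by (subst ln_le_cancel_iff) auto
    qed
    have c2: "ln (1 + 4/5 * exp s) < 2*(s-1)"
    proof -
      have "exp (2*(s-1)) = exp s * exp (s - 2)" by (simp flip: exp_add)
      also have "exp (s-2) \<ge> 2" using exp_ge_add_one_self[of "s-2"] s3 by simp
      hence "exp s * exp (s - 2) \<ge> exp s * 2" by simp
      finally have "exp (2*(s-1)) \<ge> 2 * exp s" by simp
      moreover have e1: "exp s \<ge> 1" using s3 by simp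
      ultimately have "1 + 4/5 * exp s < exp (2*(s-1))" by linarith
      thus ?thesis by (metis exp_gt_zero ln_exp ln_less_cancel_iff add_pos_pos zero_less_one mult_pos_pos zero_less_divide_iff zero_less_numeral)
    qed
    have k: "r * (\<rho>*s) < r * (\<rho> + r)" using False Rs by (simp add: algebra_simps power2_eq_square)
    hence k2: "\<rho>*s < \<rho> + r" using rpos by (simp only: mult_less_cancel_left_pos)
    have c3: "2*(s-1) < 2*R/(r+\<rho>)"
      using k2 rho rpos Rs by (simp add: divide_simps power2_eq_square) (simp add: algebra_simps)
    show False using L c1 c2 c3 by linarith
  qed
qed

end
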